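(* (i) For every real $\lambda\ge a_1$ and every $\varepsilon\ge0$, $$|w(\lambda-i\varepsilon)|^2\ge\sum_{j=1}^n c_j|\lambda-a_j|.$$ (ii) Let $\mu\in\rho(A)$ with $\Re\mu\ge a_1$. If $w(\mu)=0$, then $a_1=a_2=\dots=a_n=:\alpha$ and $\mu=\alpha$.
   Context: Fix an integer $n\ge 2$, constants $c_1,\dots,c_n>0$ and $0\le a_1\le a_2\le\dots\le a_n<\infty$. $A$ is the operator in $H=\prod_{k=1}^nL^2(0,\infty)$ given by $Au=(-c_ku_k''+a_ku_k)_k$ on $D(A)=\{u\in\prod_k H^2(0,\infty): u_i(0)=u_k(0)\ \forall i,k,\ \sum_k c_ku_k'(0^+)=0\}$ (the Laplacian-type operator on a star of $n$ half-lines with Kirchhoff conditions). Complex square root convention: $\sqrt{re^{i\phi}}=\sqrt r\,e^{i\phi/2}$ for $r\ge0$, $\phi\in[-\pi,\pi)$. For $\lambda\in\mathbb C$ let $\xi_k(\lambda)=\sqrt{(\lambda-a_k)/c_k}$, and define $w(\lambda)=i\sum_{j=1}^nc_j\xi_j(\lambda)$ if $\Im\lambda>0$ and $w(\lambda)=-i\sum_{j=1}^nc_j\xi_j(\lambda)$ if $\Im\lambda\le0$. *)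

theory Defs
  imports "HOL-Analysis.Analysis"
begin

section \<open>Square root convention: sqrt(r e^{i phi}) = sqrt r e^{i phi/2}, phi in [-pi,pi)\<close>

definition parg :: "complex \<Rightarrow> real" where
  "parg z = (if Im z = 0 \<and> Re z < 0 then - pi else Arg z)"

definition psqrt :: "complex \<Rightarrow> complex" where
  "psqrt z = complex_of_real (sqrt (cmod z)) * exp (\<i> * complex_of_real (parg z / 2))"

definition xi :: "(nat \<Rightarrow> real) \<Rightarrow> (nat \<Rightarrow> real) \<Rightarrow> nat \<Rightarrow> complex \<Rightarrow> complex" where
  "xi c a k z = psqrt ((z - complex_of_real (a k)) / complex_of_real (c k))"

definition wfun :: "nat \<Rightarrow> (nat \<Rightarrow> real) \<Rightarrow> (nat \<Rightarrow> real) \<Rightarrow> complex \<Rightarrow> complex" where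
  "wfun n c a z =
     (if Im z > 0 then \<i> * (\<Sum>j=1..n. complex_of_real (c j) * xi c a j z)
      else - \<i> * (\<Sum>j=1..n. complex_of_real (c j) * xi c a j z))"

text \<open>Elements of H are families u k (k = 1..n) of functions on (0,oo),
  identified up to equality almost everywhere.\<close>

definition L2half :: "(real \<Rightarrow> complex) \<Rightarrow> bool" where
  "L2half f \<longleftrightarrow> set_borel_measurable lborel {0<..} f
      \<and> set_integrable lborel {0<..} (\<lambda>x. (cmod (f x))\<^sup>2)"

definition Hnorm :: "nat \<Rightarrow> (nat \<Rightarrow> real \<Rightarrow> complex) \<Rightarrow> real" where
  "Hnorm n u = sqrt (\<Sum>k=1..n. (LINT x:{0<..}|lborel. (cmod (u k x))\<^sup>2))"

text \<open>H2half f f' f'': f lies in H^2(0,oo) (continuous representative on [0,oo)),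
  with first derivative f' (its continuous representative, so f' 0 = f'(0+))
  and weak second derivative f''.\<close>
definition H2half :: "(real \<Rightarrow> complex) \<Rightarrow> (real \<Rightarrow> complex) \<Rightarrow> (real \<Rightarrow> complex) \<Rightarrow> bool" where
  "H2half f f' f'' \<longleftrightarrow> L2half f \<and> L2half f' \<and> L2half f''
      \<and> (\<forall>x\<ge>0. f x = f 0 + (LINT t:{0..x}|lborel. f' t))
      \<and> (\<forall>x\<ge>0. f' x = f' 0 + (LINT t:{0..x}|lborel. f'' t))"

definition domA :: "nat \<Rightarrow> (nat \<Rightarrow> real) \<Rightarrow> (nat \<Rightarrow> real \<Rightarrow> complex) \<Rightarrow>
    (nat \<Rightarrow> real \<Rightarrow> complex) \<Rightarrow> (nat \<Rightarrow> real \<Rightarrow> complex) \<Rightarrow> bool" where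
  "domA n c u u' u'' \<longleftrightarrow> (\<forall>k\<in>{1..n}. H2half (u k) (u' k) (u'' k))
      \<and> (\<forall>i\<in>{1..n}. \<forall>k\<in>{1..n}. u i 0 = u k 0)
      \<and> (\<Sum>k=1..n. complex_of_real (c k) * u' k 0) = 0"

definition AminusMu :: "(nat \<Rightarrow> real) \<Rightarrow> (nat \<Rightarrow> real) \<Rightarrow> complex \<Rightarrow>
    (nat \<Rightarrow> real \<Rightarrow> complex) \<Rightarrow> (nat \<Rightarrow> real \<Rightarrow> complex) \<Rightarrow> nat \<Rightarrow> real \<Rightarrow> complex" where
  "AminusMu c a \<mu> u u'' k x = - complex_of_real (c k) * u'' k x + (complex_of_real (a k) - \<mu>) * u k x"

definition resolvent_set_A :: "nat \<Rightarrow> (nat \<Rightarrow> real) \<Rightarrow> (nat \<Rightarrow> real) \<Rightarrow> complex set" where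
  "resolvent_set_A n c a = {\<mu>.
     (\<forall>f. (\<forall>k\<in>{1..n}. L2half (f k)) \<longrightarrow>
        (\<exists>u u' u''. domA n c u u' u'' \<and>
           (\<forall>k\<in>{1..n}. AE x in lborel. x > 0 \<longrightarrow> AminusMu c a \<mu> u u'' k x = f k x)))
     \<and> (\<exists>C. \<forall>u u' u''. domA n c u u' u'' \<longrightarrow>
            Hnorm n u \<le> C * Hnorm n (AminusMu c a \<mu> u u''))}"

end

theory Submission
  imports Defs
begin

lemma parg_range: "-pi \<le> parg z \<and> parg z \<le> pi"
  unfolding parg_def using mpi_less_Arg[of z] Arg_le_pi[of z] by auto

lemma parg_le0: "Im z \<le> 0 \<Longrightarrow> parg z \<le> 0"
proof -
  assume h: "Im z \<le> 0"
  show ?thesis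
  proof (cases "Im z = 0 \<and> Re z < 0")
    case True then show ?thesis by (simp add: parg_def)
  next
    case False
    then have p: "parg z = Arg z" unfolding parg_def using False by (metis (mono_tags))
    show ?thesis
    proof (cases "Im z < 0")
      case True then show ?thesis using p Arg_neg_iff[of z] by simp
    next
      case False
      then have "Im z = 0" "Re z \<ge> 0" using h \<open>\<not> (Im z = 0 \<and> Re z < 0)\<close> by auto
      then have "Arg z = 0" by (simp add: Arg_eq_0 complex_is_Real_iff)
      then show ?thesis using p by simp
    qed
  qed
qed

lemma parg_pos: "Im z > 0 \<Longrightarrow> 0 < parg z \<and> parg z < pi"
  using Arg_lt_pi[of z] by (simp add: parg_def)

lemma parg_neg: "Im z < 0 \<Longrightarrow> parg z < 0 \<and> -pi < parg z"
  using Arg_neg_iff[of z] mpi_less_Arg[of z] by (simp add: parg_def)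

lemma psqrt_Re: "Re (psqrt z) = sqrt (cmod z) * cos (parg z / 2)"
proof -
  have "exp (\<i> * complex_of_real (parg z / 2)) = cis (parg z / 2)" by (simp add: cis_conv_exp)
  then show ?thesis unfolding psqrt_def by simp
qed

lemma psqrt_Im: "Im (psqrt z) = sqrt (cmod z) * sin (parg z / 2)"
proof -
  have "exp (\<i> * complex_of_real (parg z / 2)) = cis (parg z / 2)" by (simp add: cis_conv_exp)
  then show ?thesis unfolding psqrt_def by simp
qed

lemma psqrt_Re_nonneg: "Re (psqrt z) \<ge> 0"
  unfolding psqrt_Re using parg_range[of z]
  by (intro mult_nonneg_nonneg cos_ge_zero) auto

lemma psqrt_Im_nonpos: "Im z \<le> 0 \<Longrightarrow> Im (psqrt z) \<le> 0"
proof -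
  assume "Im z \<le> 0"
  then have p: "parg z \<le> 0" by (rule parg_le0)
  have "sin (- (parg z / 2)) \<ge> 0"
    using p parg_range[of z] by (intro sin_ge_zero) auto
  then have "sin (parg z / 2) \<le> 0" by simp
  then show ?thesis unfolding psqrt_Im by (simp add: mult_nonneg_nonpos)
qed

lemma psqrt_Im_pos: "Im z > 0 \<Longrightarrow> Im (psqrt z) > 0"
proof -
  assume h: "Im z > 0"
  then have "z \<noteq> 0" by auto
  then have "sqrt (cmod z) > 0" by simp
  moreover have "sin (parg z / 2) > 0" using parg_pos[OF h] by (intro sin_gt_zero) auto
  ultimately show ?thesis unfolding psqrt_Im by simp
qed

lemma psqrt_Im_neg: "Im z < 0 \<Longrightarrow> Im (psqrt z) < 0"
proof -
  assume h: "Im z < 0"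
  then have "z \<noteq> 0" by auto
  then have "sqrt (cmod z) > 0" by simp
  moreover have "sin (- (parg z / 2)) > 0" using parg_neg[OF h] by (intro sin_gt_zero) auto
  ultimately show ?thesis unfolding psqrt_Im by (simp add: mult_pos_neg)
qed

lemma psqrt_sq: "(Re (psqrt z))\<^sup>2 + (Im (psqrt z))\<^sup>2 = cmod z"
proof -
  have "(Re (psqrt z))\<^sup>2 + (Im (psqrt z))\<^sup>2
     = cmod z * (cos (parg z / 2))\<^sup>2 + cmod z * (sin (parg z / 2))\<^sup>2"
    unfolding psqrt_Re psqrt_Im by (simp add: power_mult_distrib)
  also have "\<dots> = cmod z * ((cos (parg z / 2))\<^sup>2 + (sin (parg z / 2))\<^sup>2)"
    by (simp only: distrib_left)
  also have "\<dots> = cmod z" by simp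
  finally show ?thesis .
qed

lemma sum_sq_le: "finite A \<Longrightarrow> (\<forall>x\<in>A. f x \<ge> (0::real)) \<Longrightarrow> (\<Sum>x\<in>A. (f x)\<^sup>2) \<le> (\<Sum>x\<in>A. f x)\<^sup>2"
proof (induction A rule: finite_induct)
  case empty then show ?case by simp
next
  case (insert x F)
  have "0 \<le> sum f F" using insert by (intro sum_nonneg) auto
  moreover have "0 \<le> 2 * f x * sum f F" using insert \<open>0 \<le> sum f F\<close> by simp
  ultimately have "(\<Sum>x\<in>F. (f x)\<^sup>2) + (f x)\<^sup>2 \<le> (sum f F)\<^sup>2 + (f x)\<^sup>2 + 2 * f x * sum f F"
  proof -
    have "(\<Sum>x\<in>F. (f x)\<^sup>2) \<le> (sum f F)\<^sup>2" using insert.IH insert.prems by auto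
    then show ?thesis using \<open>0 \<le> 2 * f x * sum f F\<close> by linarith
  qed
  then show ?case using insert by (simp add: power2_sum algebra_simps)
qed

theorem lemma3p7:
  fixes n :: nat and c a :: "nat \<Rightarrow> real"
  assumes n2: "n \<ge> 2"
    and cpos: "\<forall>k\<in>{1..n}. c k > 0"
    and a1nonneg: "0 \<le> a 1"
    and amono: "\<forall>i\<in>{1..n}. \<forall>j\<in>{1..n}. i \<le> j \<longrightarrow> a i \<le> a j"
  shows "(\<forall>lam::real. \<forall>\<epsilon>::real. lam \<ge> a 1 \<and> \<epsilon> \<ge> 0 \<longrightarrow>
            (cmod (wfun n c a (complex_of_real lam - \<i> * complex_of_real \<epsilon>)))\<^sup>2
              \<ge> (\<Sum>j=1..n. c j * \<bar>lam - a j\<bar>))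
       \<and> (\<forall>\<mu>\<in>resolvent_set_A n c a. Re \<mu> \<ge> a 1 \<and> wfun n c a \<mu> = 0 \<longrightarrow>
            (\<exists>\<alpha>. (\<forall>k\<in>{1..n}. a k = \<alpha>) \<and> \<mu> = complex_of_real \<alpha>))"
proof (intro conjI allI impI ballI)
  fix lam \<epsilon> :: real
  assume h: "lam \<ge> a 1 \<and> \<epsilon> \<ge> 0"
  define z where "z = complex_of_real lam - \<i> * complex_of_real \<epsilon>"
  define X where "X j = c j * Re (xi c a j z)" for j
  define Y where "Y j = - (c j * Im (xi c a j z))" for j
  have Imz: "Im z \<le> 0" using h by (simp add: z_def)
  have imarg: "Im ((z - complex_of_real (a j)) / complex_of_real (c j)) \<le> 0" if "j \<in> {1..n}" for j
    using Imz cpos that by (simp add: divide_nonpos_pos)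
  have X0: "\<forall>j\<in>{1..n}. X j \<ge> 0"
    using cpos psqrt_Re_nonneg by (auto simp: X_def xi_def)
  have Y0: "\<forall>j\<in>{1..n}. Y j \<ge> 0"
  proof
    fix j assume j: "j \<in> {1..n}"
    have "c j > 0" using cpos j by auto
    then show "Y j \<ge> 0" using psqrt_Im_nonpos[OF imarg[OF j]]
      by (simp add: Y_def xi_def mult_nonneg_nonpos)
  qed
  have w: "wfun n c a z = - \<i> * (\<Sum>j=1..n. complex_of_real (c j) * xi c a j z)"
    using Imz by (simp add: wfun_def)
  have "(cmod (wfun n c a z))\<^sup>2 = (cmod (\<Sum>j=1..n. complex_of_real (c j) * xi c a j z))\<^sup>2"
    unfolding w by (simp add: norm_mult)
  also have "\<dots> = (\<Sum>j=1..n. X j)\<^sup>2 + (\<Sum>j=1..n. Y j)\<^sup>2"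
    unfolding cmod_power2 by (simp add: X_def Y_def Re_sum Im_sum sum_negf)
  also have "\<dots> \<ge> (\<Sum>j=1..n. (X j)\<^sup>2) + (\<Sum>j=1..n. (Y j)\<^sup>2)"
    using sum_sq_le[OF _ X0] sum_sq_le[OF _ Y0] by auto
  finally have 1: "(cmod (wfun n c a z))\<^sup>2 \<ge> (\<Sum>j=1..n. (X j)\<^sup>2 + (Y j)\<^sup>2)"
    by (simp add: sum.distrib)
  have 2: "(X j)\<^sup>2 + (Y j)\<^sup>2 \<ge> c j * \<bar>lam - a j\<bar>" if j: "j \<in> {1..n}" for j
  proof -
    have cj: "c j > 0" using cpos j by auto
    have "(X j)\<^sup>2 + (Y j)\<^sup>2 = (c j)\<^sup>2 * cmod ((z - complex_of_real (a j)) / complex_of_real (c j))"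
      using psqrt_sq[of "(z - complex_of_real (a j)) / complex_of_real (c j)"]
      by (simp add: X_def Y_def xi_def power_mult_distrib algebra_simps flip: distrib_left)
    also have "\<dots> = c j * cmod (z - complex_of_real (a j))"
      using cj by (simp add: norm_divide power2_eq_square)
    also have "cmod (z - complex_of_real (a j)) \<ge> \<bar>lam - a j\<bar>"
      using abs_Re_le_cmod[of "z - complex_of_real (a j)"] by (simp add: z_def)
    then have "c j * cmod (z - complex_of_real (a j)) \<ge> c j * \<bar>lam - a j\<bar>"
      using cj by simp
    finally show ?thesis by simp
  qed
  show "(cmod (wfun n c a (complex_of_real lam - \<i> * complex_of_real \<epsilon>)))\<^sup>2
              \<ge> (\<Sum>j=1..n. c j * \<bar>lam - a j\<bar>)"
    using 1 sum_mono[of "{1..n}" "\<lambda>j. c j * \<bar>lam - a j\<bar>" "\<lambda>j. (X j)\<^sup>2 + (Y j)\<^sup>2", OF 2] unfolding z_def by linarith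
next
  fix \<mu> assume mu: "\<mu> \<in> resolvent_set_A n c a" and h: "a 1 \<le> Re \<mu> \<and> wfun n c a \<mu> = 0"
  define S where "S = (\<Sum>j=1..n. complex_of_real (c j) * xi c a j \<mu>)"
  have S0: "S = 0" using h by (auto simp: wfun_def S_def split: if_splits)
  have ImS: "Im S = (\<Sum>j=1..n. c j * Im (xi c a j \<mu>))" by (simp add: S_def Im_sum)
  have ReS: "Re S = (\<Sum>j=1..n. c j * Re (xi c a j \<mu>))" by (simp add: S_def Re_sum)
  have ne: "{1..n} \<noteq> {}" using n2 by auto
  have imarg: "Im ((\<mu> - complex_of_real (a j)) / complex_of_real (c j)) = Im \<mu> / c j" for j
    by simp
  consider "Im \<mu> > 0" | "Im \<mu> < 0" | "Im \<mu> = 0" by linarith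
  then show "\<exists>\<alpha>. (\<forall>k\<in>{1..n}. a k = \<alpha>) \<and> \<mu> = complex_of_real \<alpha>"
  proof cases
    case 1
    have "Im S > 0" unfolding ImS
    proof (rule sum_pos[OF _ ne])
      fix j assume j: "j \<in> {1..n}"
      have "Im \<mu> / c j > 0" using 1 cpos j by auto
      then show "c j * Im (xi c a j \<mu>) > 0" using psqrt_Im_pos cpos j
        by (auto simp: xi_def imarg)
    qed auto
    then show ?thesis using S0 by simp
  next
    case 2
    have "- Im S > 0" unfolding ImS sum_negf[symmetric]
    proof (rule sum_pos[OF _ ne])
      fix j assume j: "j \<in> {1..n}"
      have "Im \<mu> / c j < 0" using 2 cpos j by (auto simp: divide_neg_pos)
      then have "Im (xi c a j \<mu>) < 0" using psqrt_Im_neg by (auto simp: xi_def imarg)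
      then show "- (c j * Im (xi c a j \<mu>)) > 0" using cpos j
        by (simp add: mult_pos_neg)
    qed auto
    then show ?thesis using S0 by simp
  next
    case 3
    have Xn: "\<forall>j\<in>{1..n}. c j * Re (xi c a j \<mu>) \<ge> 0"
      using cpos psqrt_Re_nonneg by (auto simp: xi_def)
    have Yn: "\<forall>j\<in>{1..n}. - (c j * Im (xi c a j \<mu>)) \<ge> 0"
      using cpos psqrt_Im_nonpos 3 by (auto simp: xi_def imarg mult_nonneg_nonpos)
    have "(\<Sum>j=1..n. c j * Re (xi c a j \<mu>)) = 0" using ReS S0 by simp
    then have XX: "\<forall>j\<in>{1..n}. c j * Re (xi c a j \<mu>) = 0"
      using sum_nonneg_eq_0_iff[of "{1..n}" "\<lambda>j. c j * Re (xi c a j \<mu>)"] Xn finite_atLeastAtMost by blast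
    have "(\<Sum>j=1..n. - (c j * Im (xi c a j \<mu>))) = 0" using ImS S0 by (simp add: sum_negf)
    then have YY: "\<forall>j\<in>{1..n}. - (c j * Im (xi c a j \<mu>)) = 0"
      using sum_nonneg_eq_0_iff[of "{1..n}" "\<lambda>j. - (c j * Im (xi c a j \<mu>))"] Yn finite_atLeastAtMost by blast
    have eq: "a j = Re \<mu>" if j: "j \<in> {1..n}" for j
    proof -
      have cj: "c j > 0" using cpos j by auto
      have "c j * Re (xi c a j \<mu>) = 0" "- (c j * Im (xi c a j \<mu>)) = 0" using XX YY j by blast+
      then have "Re (xi c a j \<mu>) = 0" "Im (xi c a j \<mu>) = 0" using cj by auto
      then have "cmod ((\<mu> - complex_of_real (a j)) / complex_of_real (c j)) = 0"
        using psqrt_sq[of "(\<mu> - complex_of_real (a j)) / complex_of_real (c j)"]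
        by (simp add: xi_def)
      then have "\<mu> = complex_of_real (a j)" using cj by simp
      then show ?thesis by simp
    qed
    show ?thesis
      by (rule exI[of _ "Re \<mu>"]) (use eq 3 in \<open>auto simp: complex_eq_iff\<close>)
  qed
qed

end
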